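(* Let $p$ be a prime and let $\Phi:\mathbb{N}\to\mathbb{N}$ be strictly increasing. For every continuous function $f:\mathbb{Z}_p\to\mathbb{Z}_p$ there exists a unique sequence $(B(m))_{m\ge 0}=(B(\Phi,f;m))_{m\ge0}$ of elements of $\mathbb{Z}_p$ such that \[ f(x)=\sum_{m=0}^{\infty} B(\Phi,f;m)\,\chi(\Phi,m;x)\quad\text{for all }x\in\mathbb{Z}_p. \] Moreover this sequence is given by \[ B(\Phi,f;m)=\begin{cases} f(m) & \text{if } m<p^{1+\Phi(0)},\\ f(m)-f(m-M(m)) & \text{otherwise.}\end{cases} \]
   Context: $\mathbb{N}=\{0,1,2,\dots\}$. $v_p$ and $|\cdot|_p$ denote the $p$-adic valuation and absolute value on $\mathbb{Z}_p$, normalized by $v_p(p)=1$, $|p|_p=p^{-1}$. Every $x\in\mathbb{Z}_p$ is written $x=\sum_{i\ge0}x_ip^i$ with digits $x_i\in\{0,\dots,p-1\}$; for a nonnegative integer $m$, $m_i$ denote its base-$p$ digits. Set $\Phi(-1):=-1$. For $m\in\mathbb{N}$ let $\tau(m)=\tau(\Phi;m):=\min\{h\in\mathbb{N}: m<p^{1+\Phi(h)}\}$. For $m\in\mathbb{N}$ and $x\in\mathbb{Z}_p$, $\chi(\Phi,m;x):=1$ if $|x-m|_p\le p^{-1-\Phi(\tau(m))}$ and $\chi(\Phi,m;x):=0$ otherwise. For $m\ge p^{1+\Phi(0)}$ (i.e. $\tau(m)\ge1$), $M(m)=M(\Phi;m):=\sum_{i=\Phi(\tau(m)-1)+1}^{\Phi(\tau(m))}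 m_i p^i$. *)

theory Defs
  imports "HOL-Computational_Algebra.Primes"
begin

text \<open>The p-adic integers Z_p, modelled as the inverse limit of the rings Z/p^k:
  an element x is the coherent sequence of its residues x k = (x mod p^k) in {0..<p^k}.\<close>

definition Zp :: "nat \<Rightarrow> (nat \<Rightarrow> int) set" where
  "Zp p = {x. \<forall>k. 0 \<le> x k \<and> x k < int p ^ k \<and> x k = x (Suc k) mod (int p ^ k)}"

definition zp_of_nat :: "nat \<Rightarrow> nat \<Rightarrow> (nat \<Rightarrow> int)" where
  "zp_of_nat p m = (\<lambda>k. int m mod (int p ^ k))"

definition zp_add :: "nat \<Rightarrow> (nat \<Rightarrow> int) \<Rightarrow> (nat \<Rightarrow> int) \<Rightarrow> (nat \<Rightarrow> int)" where
  "zp_add p x y = (\<lambda>k. (x k + y k) mod (int p ^ k))"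

definition zp_sub :: "nat \<Rightarrow> (nat \<Rightarrow> int) \<Rightarrow> (nat \<Rightarrow> int) \<Rightarrow> (nat \<Rightarrow> int)" where
  "zp_sub p x y = (\<lambda>k. (x k - y k) mod (int p ^ k))"

definition zp_mult :: "nat \<Rightarrow> (nat \<Rightarrow> int) \<Rightarrow> (nat \<Rightarrow> int) \<Rightarrow> (nat \<Rightarrow> int)" where
  "zp_mult p x y = (\<lambda>k. (x k * y k) mod (int p ^ k))"

text \<open>|x - y|_p \<le> p^(-k) iff x and y agree modulo p^k.\<close>
definition zp_close :: "nat \<Rightarrow> nat \<Rightarrow> (nat \<Rightarrow> int) \<Rightarrow> (nat \<Rightarrow> int) \<Rightarrow> bool" where
  "zp_close p k x y \<longleftrightarrow> x k = y k"

definition zp_continuous :: "nat \<Rightarrow> ((nat \<Rightarrow> int) \<Rightarrow> (nat \<Rightarrow> int)) \<Rightarrow> bool" where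
  "zp_continuous p f \<longleftrightarrow> (\<forall>x\<in>Zp p. f x \<in> Zp p) \<and>
     (\<forall>x\<in>Zp p. \<forall>n. \<exists>k. \<forall>y\<in>Zp p. zp_close p k y x \<longrightarrow> zp_close p n (f y) (f x))"

fun zp_psum :: "nat \<Rightarrow> (nat \<Rightarrow> (nat \<Rightarrow> int)) \<Rightarrow> nat \<Rightarrow> (nat \<Rightarrow> int)" where
  "zp_psum p a 0 = (\<lambda>k. 0)"
| "zp_psum p a (Suc N) = zp_add p (zp_psum p a N) (a N)"

definition zp_sums :: "nat \<Rightarrow> (nat \<Rightarrow> (nat \<Rightarrow> int)) \<Rightarrow> (nat \<Rightarrow> int) \<Rightarrow> bool" where
  "zp_sums p a s \<longleftrightarrow> (\<forall>n. \<exists>N0. \<forall>N\<ge>N0. zp_close p n (zp_psum p a N) s)"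

definition digit :: "nat \<Rightarrow> nat \<Rightarrow> nat \<Rightarrow> nat" where
  "digit p m i = m div p ^ i mod p"

definition tau :: "nat \<Rightarrow> (nat \<Rightarrow> nat) \<Rightarrow> nat \<Rightarrow> nat" where
  "tau p \<Phi> m = (LEAST h. m < p ^ (1 + \<Phi> h))"

definition chi :: "nat \<Rightarrow> (nat \<Rightarrow> nat) \<Rightarrow> nat \<Rightarrow> (nat \<Rightarrow> int) \<Rightarrow> nat" where
  "chi p \<Phi> m x = (if zp_close p (1 + \<Phi> (tau p \<Phi> m)) x (zp_of_nat p m) then 1 else 0)"

text \<open>M(m), used only when tau(m) \<ge> 1, so Phi(tau(m)-1) is a genuine value of Phi.\<close>
definition Mfun :: "nat \<Rightarrow> (nat \<Rightarrow> nat) \<Rightarrow> nat \<Rightarrow> nat" where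
  "Mfun p \<Phi> m = (\<Sum>i\<in>{\<Phi> (tau p \<Phi> m - 1) + 1 .. \<Phi> (tau p \<Phi> m)}. digit p m i * p ^ i)"

end

theory Submission
  imports Defs
begin


lemma zp_range: "x \<in> Zp p \<Longrightarrow> 0 \<le> x k \<and> x k < int p ^ k"
  unfolding Zp_def by blast

lemma zp_step: "x \<in> Zp p \<Longrightarrow> x k = x (Suc k) mod int p ^ k"
  unfolding Zp_def by blast

lemma zp_coh:
  assumes "x \<in> Zp p" "k \<le> k'"
  shows "x k = x k' mod int p ^ k"
  using assms(2)
proof (induction k' rule: dec_induct)
  case base
  then show ?case using zp_range[OF assms(1), of k] by simp
next
  case (step j)
  have "x j = x (Suc j) mod int p ^ j" using assms(1) by (rule zp_step)
  moreover have "int p ^ k dvd int p ^ j" using step(1) by (simp add: le_imp_power_dvd)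
  ultimately show ?case using step(3) by (simp add: mod_mod_cancel)
qed

lemma of_nat_Zp: "p > 0 \<Longrightarrow> zp_of_nat p m \<in> Zp p"
  unfolding Zp_def zp_of_nat_def
  by (auto simp: mod_mod_cancel le_imp_power_dvd)

lemma sub_Zp:
  assumes "p > 0" "a \<in> Zp p" "b \<in> Zp p"
  shows "zp_sub p a b \<in> Zp p"
  unfolding Zp_def zp_sub_def mem_Collect_eq
proof (intro allI conjI)
  fix k
  show "0 \<le> (a k - b k) mod int p ^ k" using assms by simp
  show "(a k - b k) mod int p ^ k < int p ^ k" using assms by simp
  have "a k = a (Suc k) mod int p ^ k" "b k = b (Suc k) mod int p ^ k"
    using assms by (auto intro: zp_step)
  hence "(a k - b k) mod int p ^ k = (a (Suc k) - b (Suc k)) mod int p ^ k"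
    by (metis mod_diff_eq)
  also have "\<dots> = (a (Suc k) - b (Suc k)) mod int p ^ Suc k mod int p ^ k"
    by (simp add: mod_mod_cancel le_imp_power_dvd)
  finally show "(a k - b k) mod int p ^ k = (a (Suc k) - b (Suc k)) mod int p ^ Suc k mod int p ^ k" .
qed

lemma psum_eq: "zp_psum p a N k = (\<Sum>m<N. a m k) mod int p ^ k"
proof (induction N)
  case 0 then show ?case by simp
next
  case (Suc N)
  have "zp_psum p a (Suc N) k = (zp_psum p a N k + a N k) mod int p ^ k"
    by (simp add: zp_add_def)
  also have "\<dots> = ((\<Sum>m<N. a m k) mod int p ^ k + a N k) mod int p ^ k" using Suc by simp
  also have "\<dots> = ((\<Sum>m<N. a m k) + a N k) mod int p ^ k" by (rule mod_add_left_eq)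
  finally show ?case by simp
qed

lemma mult_term:
  assumes "p \<ge> 2" "b \<in> Zp p" "k \<ge> 1"
  shows "zp_mult p b (zp_of_nat p (if P then 1 else 0)) k = (if P then b k else 0)"
proof -
  have "(1::int) < int p ^ k" using assms
    by (intro one_less_power) auto
  thus ?thesis using zp_range[OF assms(2), of k]
    by (auto simp: zp_mult_def zp_of_nat_def)
qed

lemma digits_mod: "(m::nat) mod p ^ b = (\<Sum>i<b. digit p m i * p ^ i)"
proof (induction b)
  case 0 then show ?case by simp
next
  case (Suc b)
  have "m mod p ^ Suc b = m mod (p ^ b * p)" by (simp only: power_Suc2)
  also have "\<dots> = p ^ b * (m div p ^ b mod p) + m mod p ^ b" by (rule mod_mult2_eq)
  finally have "m mod p ^ Suc b = p ^ b * (m div p ^ b mod p) + m mod p ^ b" .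
  then show ?case using Suc by (simp add: digit_def mult.commute)
qed

context
  fixes p :: nat and \<Phi> :: "nat \<Rightarrow> nat"
  assumes p2: "p \<ge> 2" and sm: "strict_mono \<Phi>"
begin

lemma pw_mono: "h \<le> h' \<Longrightarrow> p ^ (1 + \<Phi> h) \<le> p ^ (1 + \<Phi> h')"
  using p2 sm by (intro power_increasing) (auto simp: strict_mono_less_eq)

lemma pw_dvd: "h \<le> h' \<Longrightarrow> p ^ (1 + \<Phi> h) dvd p ^ (1 + \<Phi> h')"
  using sm by (intro le_imp_power_dvd) (auto simp: strict_mono_less_eq)

lemma tau_ex: "m < p ^ (1 + \<Phi> (tau p \<Phi> m))"
proof -
  have "m < p ^ (1 + \<Phi> m)"
  proof -
    have "m < 2 ^ m" by (rule less_exp)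
    also have "\<dots> \<le> p ^ m" using p2 by (rule power_mono) simp
    also have "\<dots> \<le> p ^ (1 + \<Phi> m)"
    proof (rule power_increasing)
      show "m \<le> 1 + \<Phi> m" using strict_mono_imp_increasing[OF sm, of m] by simp
      show "1 \<le> p" using p2 by simp
    qed
    finally show ?thesis .
  qed
  then show ?thesis unfolding tau_def by (rule LeastI)
qed

lemma tau_le: "m < p ^ (1 + \<Phi> h) \<Longrightarrow> tau p \<Phi> m \<le> h"
  unfolding tau_def by (rule Least_le)

lemma tau_low: "tau p \<Phi> m \<ge> 1 \<Longrightarrow> p ^ (1 + \<Phi> (tau p \<Phi> m - 1)) \<le> m"
proof -
  assume "tau p \<Phi> m \<ge> 1"
  hence "tau p \<Phi> m - 1 < tau p \<Phi> m" by simp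
  hence "\<not> m < p ^ (1 + \<Phi> (tau p \<Phi> m - 1))" unfolding tau_def by (rule not_less_Least)
  thus ?thesis by (simp add: not_less)
qed

lemma tau0: "tau p \<Phi> m = 0 \<longleftrightarrow> m < p ^ (1 + \<Phi> 0)"
proof
  assume "tau p \<Phi> m = 0" thus "m < p ^ (1 + \<Phi> 0)" using tau_ex[of m] by simp
next
  assume "m < p ^ (1 + \<Phi> 0)" thus "tau p \<Phi> m = 0" using tau_le[of m 0] by simp
qed

lemma M_eq:
  assumes "tau p \<Phi> m \<ge> 1"
  shows "m - Mfun p \<Phi> m = m mod p ^ (1 + \<Phi> (tau p \<Phi> m - 1))"
proof -
  define t where "t = tau p \<Phi> m"
  define a where "a = \<Phi> (t - 1)"
  define c where "c = \<Phi> t"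
  have ac: "a < c" unfolding a_def c_def using sm assms t_def by (simp add: strict_mono_less)
  have m1: "m = m mod p ^ (1 + c)" using tau_ex[of m] unfolding c_def t_def by simp
  have m2: "m mod p ^ (1 + c) = (\<Sum>i<1 + c. digit p m i * p ^ i)" by (rule digits_mod)
  have m3: "m mod p ^ (1 + a) = (\<Sum>i<1 + a. digit p m i * p ^ i)" by (rule digits_mod)
  have U: "{..<1 + c} = {..<1 + a} \<union> {a + 1 .. c}" using ac by auto
  have "(\<Sum>i<1 + c. digit p m i * p ^ i) = (\<Sum>i<1 + a. digit p m i * p ^ i) + (\<Sum>i\<in>{a+1..c}. digit p m i * p ^ i)"
    unfolding U by (rule sum.union_disjoint) auto
  hence "m = m mod p ^ (1 + a) + Mfun p \<Phi> m"
    using m1 m2 m3 by (simp add: Mfun_def a_def c_def t_def)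
  thus ?thesis unfolding a_def t_def by linarith
qed


lemma pw_pos: "0 < p ^ k" using p2 by simp

lemma mod_triv_int: "m < p ^ k \<Longrightarrow> int m mod int p ^ k = int m"
  by (metis of_nat_less_iff of_nat_power mod_pos_pos_trivial of_nat_0_le_iff)

lemma chi_iff: "chi p \<Phi> m x = (if x (1 + \<Phi> (tau p \<Phi> m)) = int m then 1 else 0)"
  using mod_triv_int[OF tau_ex[of m]]
  by (simp add: chi_def zp_close_def zp_of_nat_def)

lemma lev_mono: "h \<le> j \<Longrightarrow> 1 + \<Phi> h \<le> 1 + \<Phi> j"
  using sm by (simp add: strict_mono_less_eq)

lemma G:
  assumes "x \<in> Zp p" "x (1 + \<Phi> (tau p \<Phi> m)) = int m" "tau p \<Phi> m \<le> j"
  shows "int m = x (1 + \<Phi> j) mod int p ^ (1 + \<Phi> (tau p \<Phi> m))"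
  using zp_coh[OF assms(1) lev_mono[OF assms(3)]] assms(2) by simp

lemma G':
  assumes "x \<in> Zp p" "x (1 + \<Phi> (tau p \<Phi> m)) = int m" "tau p \<Phi> m \<le> j"
  shows "m \<le> nat (x (1 + \<Phi> j))"
proof -
  have "int m \<le> x (1 + \<Phi> j)"
    using G[OF assms] zmod_le_nonneg_dividend zp_range[OF assms(1)] by metis
  thus ?thesis by simp
qed

lemma E1:
  fixes j :: nat
  assumes "x \<in> Zp p"
  defines "q \<equiv> nat (x (1 + \<Phi> j))"
  shows "x (1 + \<Phi> (tau p \<Phi> q)) = int q"
proof -
  have iq: "int q = x (1 + \<Phi> j)" using zp_range[OF assms(1)] q_def by simp
  have "int q < int p ^ (1 + \<Phi> j)" unfolding iq using zp_range[OF assms(1)] by blast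
  hence "q < p ^ (1 + \<Phi> j)" by (metis of_nat_less_iff of_nat_power)
  hence tj: "tau p \<Phi> q \<le> j" by (rule tau_le)
  have "x (1 + \<Phi> (tau p \<Phi> q)) = x (1 + \<Phi> j) mod int p ^ (1 + \<Phi> (tau p \<Phi> q))"
    by (rule zp_coh[OF assms(1) lev_mono[OF tj]])
  also have "\<dots> = int q" using iq mod_triv_int[OF tau_ex[of q]] by simp
  finally show ?thesis .
qed

lemma K:
  assumes "x (1 + \<Phi> (tau p \<Phi> N)) = int N" "x (1 + \<Phi> (tau p \<Phi> m)) = int m" "m < N"
  shows "tau p \<Phi> m < tau p \<Phi> N"
proof -
  have "m < p ^ (1 + \<Phi> (tau p \<Phi> N))" using tau_ex[of N] assms(3) by simp
  hence "tau p \<Phi> m \<le> tau p \<Phi> N" by (rule tau_le)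
  moreover have "tau p \<Phi> m \<noteq> tau p \<Phi> N" using assms by auto
  ultimately show ?thesis by simp
qed


lemma inv:
  fixes F :: "nat \<Rightarrow> nat \<Rightarrow> int"
  assumes x: "x \<in> Zp p" and FZ: "\<And>m. F m \<in> Zp p"
  defines "C \<equiv> {m. x (1 + \<Phi> (tau p \<Phi> m)) = int m}"
  defines "B \<equiv> (\<lambda>m. if m < p ^ (1 + \<Phi> 0) then F m else zp_sub p (F m) (F (m - Mfun p \<Phi> m)))"
  shows "(\<Sum>m<N. if m \<in> C then B m n else 0) mod int p ^ n
         = (if C \<inter> {..<N} = {} then 0 else F (Max (C \<inter> {..<N})) n)"
proof (induction N)
  case 0 then show ?case by simp
next
  case (Suc N)
  let ?S = "(\<Sum>m<N. if m \<in> C then B m n else 0)"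
  show ?case
  proof (cases "N \<in> C")
    case False
    hence "C \<inter> {..<Suc N} = C \<inter> {..<N}" by (auto simp: less_Suc_eq)
    then show ?thesis using Suc False by simp
  next
    case True
    have NC: "x (1 + \<Phi> (tau p \<Phi> N)) = int N" using True C_def by simp
    have ne: "C \<inter> {..<Suc N} \<noteq> {}" using True by auto
    have mx: "Max (C \<inter> {..<Suc N}) = N" using True by (intro Max_eqI) auto
    have Fr: "0 \<le> F N n \<and> F N n < int p ^ n" using zp_range[OF FZ] by blast
    have sumeq: "(\<Sum>m<Suc N. if m \<in> C then B m n else 0) = ?S + B N n" using True by simp
    show ?thesis
    proof (cases "N < p ^ (1 + \<Phi> 0)")
      case True
      have t0: "tau p \<Phi> N = 0" using True tau0 by simp
      have emp: "C \<inter> {..<N} = {}"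
      proof (rule ccontr)
        assume "C \<inter> {..<N} \<noteq> {}"
        then obtain m where "m \<in> C" "m < N" by auto
        hence "tau p \<Phi> m < tau p \<Phi> N" using K[of x N m] NC C_def by simp
        thus False using t0 by simp
      qed
      hence "?S mod int p ^ n = 0" using Suc.IH by simp
      hence "(?S + B N n) mod int p ^ n = (0 + B N n) mod int p ^ n" by (metis mod_add_left_eq)
      also have "\<dots> = F N n" using True Fr B_def by simp
      finally show ?thesis using sumeq ne mx by simp
    next
      case False
      define t where "t = tau p \<Phi> N"
      have t1: "t \<ge> 1" using False tau0[of N] t_def by linarith
      define q where "q = N - Mfun p \<Phi> N"
      have q1: "q = N mod p ^ (1 + \<Phi> (t - 1))" using M_eq t1 t_def q_def by simp
      have "int q = int N mod int p ^ (1 + \<Phi> (t - 1))" using q1 by (simp add: zmod_int)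
      also have "\<dots> = x (1 + \<Phi> (t - 1))"
        using zp_coh[OF x lev_mono[of "t - 1" t]] NC t_def by simp
      finally have iq: "int q = x (1 + \<Phi> (t - 1))" .
      hence qn: "q = nat (x (1 + \<Phi> (t - 1)))" by simp
      have qC: "q \<in> C" using E1[OF x, of "t - 1"] qn C_def by simp
      have "q < p ^ (1 + \<Phi> (t - 1))" using q1 p2 by simp
      also have "\<dots> \<le> N" using tau_low[of N] t1 t_def by simp
      finally have qN: "q < N" .
      have mxq: "Max (C \<inter> {..<N}) = q"
      proof (rule Max_eqI)
        show "finite (C \<inter> {..<N})" by simp
        show "q \<in> C \<inter> {..<N}" using qC qN by simp
        fix m assume "m \<in> C \<inter> {..<N}"
        hence mC: "x (1 + \<Phi> (tau p \<Phi> m)) = int m" and "m < N" using C_def by auto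
        hence "tau p \<Phi> m < t" using K[of x N m] NC t_def by simp
        hence "tau p \<Phi> m \<le> t - 1" by simp
        from G'[OF x mC this] show "m \<le> q" using qn by simp
      qed
      have "C \<inter> {..<N} \<noteq> {}" using qC qN by auto
      hence Sq: "?S mod int p ^ n = F q n" using Suc.IH mxq by simp
      have BN: "B N n = (F N n - F q n) mod int p ^ n"
        using False B_def q_def by (simp add: zp_sub_def)
      have "(?S + B N n) mod int p ^ n = (?S mod int p ^ n + B N n) mod int p ^ n"
        by (simp add: mod_add_left_eq)
      also have "\<dots> = (F q n + (F N n - F q n)) mod int p ^ n" using Sq BN by (simp add: mod_add_right_eq)
      also have "\<dots> = F N n" using Fr by simp
      finally show ?thesis using sumeq ne mx by simp
    qed
  qed
qed


lemma BZ:
  assumes FZ: "\<And>m. f (zp_of_nat p m) \<in> Zp p"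
  shows "(if m < p ^ (1 + \<Phi> 0) then f (zp_of_nat p m)
          else zp_sub p (f (zp_of_nat p m)) (f (zp_of_nat p (m - Mfun p \<Phi> m)))) \<in> Zp p"
  using FZ sub_Zp[of p] p2 by simp

lemma exist:
  assumes x: "x \<in> Zp p" and FZ: "\<And>m. f (zp_of_nat p m) \<in> Zp p" and fx: "f x \<in> Zp p"
    and cont: "\<And>n. \<exists>k. \<forall>y\<in>Zp p. zp_close p k y x \<longrightarrow> zp_close p n (f y) (f x)"
  defines "B \<equiv> (\<lambda>m. if m < p ^ (1 + \<Phi> 0) then f (zp_of_nat p m)
                        else zp_sub p (f (zp_of_nat p m)) (f (zp_of_nat p (m - Mfun p \<Phi> m))))"
  shows "zp_sums p (\<lambda>m. zp_mult p (B m) (zp_of_nat p (chi p \<Phi> m x))) (f x)"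
  unfolding zp_sums_def
proof
  fix n
  define C where "C = {m. x (1 + \<Phi> (tau p \<Phi> m)) = int m}"
  show "\<exists>N0. \<forall>N\<ge>N0. zp_close p n (zp_psum p (\<lambda>m. zp_mult p (B m) (zp_of_nat p (chi p \<Phi> m x))) N) (f x)"
  proof (cases "n = 0")
    case True
    have "f x 0 = 0" using zp_range[OF fx, of 0] by simp
    then show ?thesis using True by (simp add: zp_close_def psum_eq)
  next
    case False
    hence n1: "n \<ge> 1" by simp
    obtain k where hk: "\<forall>y\<in>Zp p. zp_close p k y x \<longrightarrow> zp_close p n (f y) (f x)" using cont by blast
    define qH where "qH = nat (x (1 + \<Phi> k))"
    have qHC: "qH \<in> C" using E1[OF x, of k] qH_def C_def by simp
    have BZ': "\<And>m. B m \<in> Zp p" unfolding B_def by (rule BZ[of f, OF FZ])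
    show ?thesis
    proof (intro exI allI impI)
      fix N assume "Suc qH \<le> N"
      hence qHN: "qH < N" by simp
      have terms: "\<And>m. zp_mult p (B m) (zp_of_nat p (chi p \<Phi> m x)) n = (if m \<in> C then B m n else 0)"
        unfolding chi_iff C_def using mult_term[OF p2 BZ' n1] by simp
      have "zp_psum p (\<lambda>m. zp_mult p (B m) (zp_of_nat p (chi p \<Phi> m x))) N n
            = (\<Sum>m<N. if m \<in> C then B m n else 0) mod int p ^ n"
        by (simp add: psum_eq terms)
      also have "\<dots> = (if C \<inter> {..<N} = {} then 0 else f (zp_of_nat p (Max (C \<inter> {..<N}))) n)"
        unfolding C_def B_def by (rule inv[OF x FZ])
      also have "\<dots> = f (zp_of_nat p (Max (C \<inter> {..<N}))) n" using qHC qHN by auto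
      finally have ps: "zp_psum p (\<lambda>m. zp_mult p (B m) (zp_of_nat p (chi p \<Phi> m x))) N n
            = f (zp_of_nat p (Max (C \<inter> {..<N}))) n" .
      define ms where "ms = Max (C \<inter> {..<N})"
      have msC: "ms \<in> C" and qms: "qH \<le> ms"
        using qHC qHN Max_in[of "C \<inter> {..<N}"] Max_ge[of "C \<inter> {..<N}" qH] ms_def by auto
      have msx: "x (1 + \<Phi> (tau p \<Phi> ms)) = int ms" using msC C_def by simp
      have kH: "k \<le> 1 + \<Phi> k" using strict_mono_imp_increasing[OF sm, of k] by simp
      have close: "int ms mod int p ^ k = x k"
      proof (cases "tau p \<Phi> ms \<le> k")
        case True
        have "ms \<le> qH" using G'[OF x msx True] qH_def by simp
        hence "ms = qH" using qms by simp
        hence "int ms = x (1 + \<Phi> k)" using qH_def zp_range[OF x] by simp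
        thus ?thesis using zp_coh[OF x kH] by simp
      next
        case False
        hence "k \<le> 1 + \<Phi> (tau p \<Phi> ms)" using kH lev_mono[of k "tau p \<Phi> ms"] by simp
        thus ?thesis using zp_coh[OF x] msx by metis
      qed
      have "zp_close p k (zp_of_nat p ms) x" using close by (simp add: zp_close_def zp_of_nat_def)
      hence "zp_close p n (f (zp_of_nat p ms)) (f x)" using hk of_nat_Zp[of p ms] p2 by simp
      thus "zp_close p n (zp_psum p (\<lambda>m. zp_mult p (B m) (zp_of_nat p (chi p \<Phi> m x))) N) (f x)"
        using ps ms_def by (simp add: zp_close_def)
    qed
  qed
qed


lemma uniq_step:
  assumes BZ: "\<And>m. B m \<in> Zp p" and B'Z: "\<And>m. B' m \<in> Zp p"
    and sB: "zp_sums p (\<lambda>m. zp_mult p (B m) (zp_of_nat p (chi p \<Phi> m (zp_of_nat p M)))) s"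
    and sB': "zp_sums p (\<lambda>m. zp_mult p (B' m) (zp_of_nat p (chi p \<Phi> m (zp_of_nat p M)))) s"
    and IH: "\<And>m. m < M \<Longrightarrow> B m = B' m"
  shows "B M = B' M"
proof
  fix n
  show "B M n = B' M n"
  proof (cases "n = 0")
    case True
    then show ?thesis using zp_range[OF BZ, of M 0] zp_range[OF B'Z, of M 0] by simp
  next
    case False
    hence n1: "n \<ge> 1" by simp
    define x where "x = zp_of_nat p M"
    define C where "C = {m. x (1 + \<Phi> (tau p \<Phi> m)) = int m}"
    have Cle: "m \<le> M" if "m \<in> C" for m
    proof -
      have "int m = int M mod int p ^ (1 + \<Phi> (tau p \<Phi> m))"
        using that unfolding C_def x_def zp_of_nat_def by simp
      hence "int m \<le> int M" by (metis zmod_le_nonneg_dividend of_nat_0_le_iff)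
      thus ?thesis by simp
    qed
    have MC: "M \<in> C" unfolding C_def x_def zp_of_nat_def using mod_triv_int[OF tau_ex[of M]] by simp
    have key: "zp_psum p (\<lambda>m. zp_mult p (D m) (zp_of_nat p (chi p \<Phi> m x))) N n
        = ((\<Sum>m<M. if m \<in> C then D m n else 0) + D M n) mod int p ^ n"
      if DZ: "\<And>m. D m \<in> Zp p" and NM: "M < N" for D N
    proof -
      have terms: "\<And>m. zp_mult p (D m) (zp_of_nat p (chi p \<Phi> m x)) n = (if m \<in> C then D m n else 0)"
        unfolding chi_iff C_def using mult_term[OF p2 DZ n1] by simp
      have "(\<Sum>m<N. if m \<in> C then D m n else 0) = (\<Sum>m<Suc M. if m \<in> C then D m n else 0)"
        using NM Cle by (intro sum.mono_neutral_right) (auto, fastforce)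
      thus ?thesis using MC by (simp add: psum_eq terms)
    qed
    obtain N1 where N1: "\<forall>N\<ge>N1. zp_close p n (zp_psum p (\<lambda>m. zp_mult p (B m) (zp_of_nat p (chi p \<Phi> m x))) N) s"
      using sB unfolding zp_sums_def x_def by blast
    obtain N2 where N2: "\<forall>N\<ge>N2. zp_close p n (zp_psum p (\<lambda>m. zp_mult p (B' m) (zp_of_nat p (chi p \<Phi> m x))) N) s"
      using sB' unfolding zp_sums_def x_def by blast
    define N where "N = max (max N1 N2) (Suc M)"
    let ?S = "\<Sum>m<M. if m \<in> C then B m n else 0"
    have SS: "?S = (\<Sum>m<M. if m \<in> C then B' m n else 0)" using IH by (intro sum.cong) auto
    have "(?S + B M n) mod int p ^ n = s n"
      using N1 key[of B N, OF BZ] N_def by (auto simp: zp_close_def)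
    moreover have "(?S + B' M n) mod int p ^ n = s n"
      using N2 key[of B' N, OF B'Z] N_def SS by (auto simp: zp_close_def)
    ultimately have "(?S + B M n) mod int p ^ n = (?S + B' M n) mod int p ^ n" by simp
    hence "((?S + B M n) mod int p ^ n - ?S) mod int p ^ n = ((?S + B' M n) mod int p ^ n - ?S) mod int p ^ n"
      by simp
    hence "B M n mod int p ^ n = B' M n mod int p ^ n" by (simp add: mod_diff_left_eq)
    thus ?thesis using zp_range[OF BZ, of M n] zp_range[OF B'Z, of M n] by simp
  qed
qed

end


theorem proposition1:
  fixes p :: nat and \<Phi> :: "nat \<Rightarrow> nat" and f :: "(nat \<Rightarrow> int) \<Rightarrow> (nat \<Rightarrow> int)"
  assumes "prime p" and "strict_mono \<Phi>" and "zp_continuous p f"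
  shows "(\<exists>!B. (\<forall>m. B m \<in> Zp p) \<and>
            (\<forall>x\<in>Zp p. zp_sums p (\<lambda>m. zp_mult p (B m) (zp_of_nat p (chi p \<Phi> m x))) (f x)))
       \<and> (let B = (\<lambda>m. if m < p ^ (1 + \<Phi> 0) then f (zp_of_nat p m)
                        else zp_sub p (f (zp_of_nat p m)) (f (zp_of_nat p (m - Mfun p \<Phi> m))))
          in (\<forall>m. B m \<in> Zp p) \<and>
             (\<forall>x\<in>Zp p. zp_sums p (\<lambda>m. zp_mult p (B m) (zp_of_nat p (chi p \<Phi> m x))) (f x)))"
proof -
  have p2: "p \<ge> 2" using assms(1) by (rule prime_ge_2_nat)
  note sm = assms(2)
  have fZ: "\<And>x. x \<in> Zp p \<Longrightarrow> f x \<in> Zp p" using assms(3) unfolding zp_continuous_def by blast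
  have cont: "\<And>x n. x \<in> Zp p \<Longrightarrow> \<exists>k. \<forall>y\<in>Zp p. zp_close p k y x \<longrightarrow> zp_close p n (f y) (f x)"
    using assms(3) unfolding zp_continuous_def by blast
  have FZ: "\<And>m. f (zp_of_nat p m) \<in> Zp p" using fZ of_nat_Zp p2 by simp
  define B0 where "B0 = (\<lambda>m. if m < p ^ (1 + \<Phi> 0) then f (zp_of_nat p m)
                        else zp_sub p (f (zp_of_nat p m)) (f (zp_of_nat p (m - Mfun p \<Phi> m))))"
  have B0Z: "\<forall>m. B0 m \<in> Zp p" unfolding B0_def using BZ[OF p2 sm, of f, OF FZ] by blast
  have B0S: "\<forall>x\<in>Zp p. zp_sums p (\<lambda>m. zp_mult p (B0 m) (zp_of_nat p (chi p \<Phi> m x))) (f x)"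
  proof
    fix x assume x: "x \<in> Zp p"
    show "zp_sums p (\<lambda>m. zp_mult p (B0 m) (zp_of_nat p (chi p \<Phi> m x))) (f x)"
      unfolding B0_def by (rule exist[OF p2 sm x FZ fZ[OF x] cont[OF x]])
  qed
  have uniq: "B = B0" if BZ: "\<forall>m. B m \<in> Zp p"
    and BS: "\<forall>x\<in>Zp p. zp_sums p (\<lambda>m. zp_mult p (B m) (zp_of_nat p (chi p \<Phi> m x))) (f x)" for B
  proof
    fix M show "B M = B0 M"
    proof (induction M rule: less_induct)
      case (less M)
      have xM: "zp_of_nat p M \<in> Zp p" using of_nat_Zp p2 by simp
      show ?case
        by (rule uniq_step[OF p2 sm, of B B0 M "f (zp_of_nat p M)"])
           (use BZ B0Z BS B0S xM less in auto)
    qed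
  qed
  show ?thesis unfolding Let_def B0_def[symmetric]
    using B0Z B0S uniq by blast
qed

end
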